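(* If $G$ is a connected $\mathcal{C}$-$\mathrm{HH}$ graph which is not a tree, then its girth satisfies $g(G)\le 6$.
   Context: The girth $g(G)$ is the minimum length of a cycle in $G$. Subgraphs are induced; a homomorphism maps edges to edges. A graph $G$ is $\mathcal{C}$-$\mathrm{HH}$ if every homomorphism from a finite connected induced subgraph of $G$ into $G$ extends to a homomorphism $G\to G$. *)

theory Defs
  imports Main "HOL-Library.Extended_Nat"
begin

definition graph :: "'a set \<Rightarrow> ('a \<Rightarrow> 'a \<Rightarrow> bool) \<Rightarrow> bool" where
  "graph V E \<longleftrightarrow> (\<forall>x y. E x y \<longrightarrow> x \<in> V \<and> y \<in> V \<and> E y x \<and> x \<noteq> y)"

definition walk :: "('a \<Rightarrow> 'a \<Rightarrow> bool) \<Rightarrow> 'a list \<Rightarrow> bool" where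
  "walk E xs \<longleftrightarrow> (\<forall>i. Suc i < length xs \<longrightarrow> E (xs ! i) (xs ! Suc i))"

definition connected_on :: "('a \<Rightarrow> 'a \<Rightarrow> bool) \<Rightarrow> 'a set \<Rightarrow> bool" where
  "connected_on E S \<longleftrightarrow> S \<noteq> {} \<and>
     (\<forall>x\<in>S. \<forall>y\<in>S. \<exists>xs. xs \<noteq> [] \<and> hd xs = x \<and> last xs = y \<and> set xs \<subseteq> S \<and> walk E xs)"

definition is_cycle :: "'a set \<Rightarrow> ('a \<Rightarrow> 'a \<Rightarrow> bool) \<Rightarrow> 'a list \<Rightarrow> bool" where
  "is_cycle V E xs \<longleftrightarrow> length xs \<ge> 3 \<and> distinct xs \<and> set xs \<subseteq> V \<and>
     (\<forall>i < length xs. E (xs ! i) (xs ! ((Suc i) mod length xs)))"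

definition acyclic_graph :: "'a set \<Rightarrow> ('a \<Rightarrow> 'a \<Rightarrow> bool) \<Rightarrow> bool" where
  "acyclic_graph V E \<longleftrightarrow> \<not> (\<exists>xs. is_cycle V E xs)"

definition is_tree :: "'a set \<Rightarrow> ('a \<Rightarrow> 'a \<Rightarrow> bool) \<Rightarrow> bool" where
  "is_tree V E \<longleftrightarrow> connected_on E V \<and> acyclic_graph V E"

text \<open>Girth: minimum length of a cycle (as an extended natural; \<infinity> if acyclic).\<close>
definition girth :: "'a set \<Rightarrow> ('a \<Rightarrow> 'a \<Rightarrow> bool) \<Rightarrow> enat" where
  "girth V E = (INF xs \<in> {xs. is_cycle V E xs}. enat (length xs))"

definition hom_on :: "('a \<Rightarrow> 'a \<Rightarrow> bool) \<Rightarrow> 'a set \<Rightarrow> 'a set \<Rightarrow> ('a \<Rightarrow> 'a) \<Rightarrow> bool" where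
  "hom_on E S V f \<longleftrightarrow> (\<forall>x\<in>S. f x \<in> V) \<and> (\<forall>x\<in>S. \<forall>y\<in>S. E x y \<longrightarrow> E (f x) (f y))"

definition C_HH :: "'a set \<Rightarrow> ('a \<Rightarrow> 'a \<Rightarrow> bool) \<Rightarrow> bool" where
  "C_HH V E \<longleftrightarrow> (\<forall>S f. S \<subseteq> V \<and> finite S \<and> connected_on E S \<and> hom_on E S V f \<longrightarrow>
     (\<exists>g. hom_on E V V g \<and> (\<forall>x\<in>S. g x = f x)))"

end

theory Submission
  imports Defs
begin

lemma cyc_adj:
  assumes "is_cycle V E xs" "Suc a < length xs"
  shows "E (xs!a) (xs!Suc a)"
proof -
  have "\<forall>i<length xs. E (xs ! i) (xs ! (Suc i mod length xs))" using assms unfolding is_cycle_def by blast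
  thus ?thesis using assms(2) by (metis Suc_lessD mod_less)
qed

lemma cyc_adj2:
  assumes "graph V E" "is_cycle V E xs" "a < length xs" "b < length xs" "Suc a = b \<or> Suc b = a"
  shows "E (xs!a) (xs!b)"
  using assms cyc_adj[OF assms(2)] unfolding graph_def by auto

lemma cyc_last:
  assumes "is_cycle V E xs"
  shows "E (xs!(length xs - 1)) (xs!0)"
proof -
  have n: "length xs \<ge> 3" using assms unfolding is_cycle_def by auto
  have "E (xs!(length xs - 1)) (xs!((Suc (length xs - 1)) mod length xs))"
    using assms n unfolding is_cycle_def by auto
  moreover have "Suc (length xs - 1) = length xs" using n by simp
  ultimately show ?thesis by simp
qed

lemma chordless:
  assumes g: "graph V E" and cyc: "is_cycle V E xs"
    and mn: "\<forall>ys. is_cycle V E ys \<longrightarrow> length xs \<le> length ys"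
    and ij: "i < j" "j < length xs" and e: "E (xs!i) (xs!j)"
  shows "j = Suc i \<or> (i = 0 \<and> j = length xs - 1)"
proof (rule ccontr)
  assume c: "\<not> (j = Suc i \<or> (i = 0 \<and> j = length xs - 1))"
  define ys where "ys = map (\<lambda>t. xs!(i+t)) [0..<j-i+1]"
  have len: "length ys = j - i + 1" unfolding ys_def by simp
  have l3: "length ys \<ge> 3" using c ij len by auto
  have llt: "length ys < length xs" using c ij len by auto
  have dist: "distinct ys" unfolding ys_def
  proof (subst distinct_map, intro conjI)
    show "inj_on (\<lambda>t. xs ! (i + t)) (set [0..<j - i + 1])"
      using cyc ij unfolding inj_on_def is_cycle_def by (auto simp: nth_eq_iff_index_eq)
  qed simp
  have sv: "set ys \<subseteq> V"
  proof
    fix x assume "x \<in> set ys"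
    then obtain t where t: "t < j-i+1" "x = xs!(i+t)" unfolding ys_def by (auto simp del: upt_Suc)
    then have "i+t < length xs" using ij by simp
    then have "x \<in> set xs" using t nth_mem by metis
    then show "x \<in> V" using cyc unfolding is_cycle_def by auto
  qed
  have adj: "\<forall>t < length ys. E (ys!t) (ys!((Suc t) mod length ys))"
  proof (intro allI impI)
    fix t assume t: "t < length ys"
    show "E (ys!t) (ys!((Suc t) mod length ys))"
    proof (cases "Suc t < length ys")
      case True
      then have "ys!t = xs!(i+t)" "ys!((Suc t) mod length ys) = xs!(Suc (i+t))"
        unfolding ys_def using len by (auto simp del: upt_Suc)
      then show ?thesis using cyc_adj[OF cyc, of "i+t"] True len ij by simp
    next
      case False
      then have "t = j - i" using t len by simp
      then have "ys!t = xs!j" "ys!((Suc t) mod length ys) = xs!i"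
        unfolding ys_def using len ij by (auto simp del: upt_Suc)
      then show ?thesis using e g unfolding graph_def by auto
    qed
  qed
  have "is_cycle V E ys" unfolding is_cycle_def using l3 dist sv adj by auto
  then show False using mn llt by auto
qed

lemma walk_rev:
  assumes "graph V E" "walk E xs"
  shows "walk E (rev xs)"
  unfolding walk_def
proof (intro allI impI)
  fix i assume i: "Suc i < length (rev xs)"
  have "E (xs ! (length xs - Suc (Suc i))) (xs ! Suc (length xs - Suc (Suc i)))"
    using assms(2) i unfolding walk_def by auto
  moreover have "Suc (length xs - Suc (Suc i)) = length xs - Suc i" using i by simp
  ultimately show "E (rev xs ! i) (rev xs ! Suc i)"
    using assms(1) i unfolding graph_def by (auto simp: rev_nth)
qed

lemma seg_walk:
  assumes cyc: "is_cycle V E xs" and ij: "i \<le> j" "j < length xs"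
  shows "walk E (map (\<lambda>t. xs!(i+t)) [0..<j-i+1])"
  unfolding walk_def
proof (intro allI impI)
  fix t assume t: "Suc t < length (map (\<lambda>t. xs!(i+t)) [0..<j-i+1])"
  then show "E (map (\<lambda>t. xs!(i+t)) [0..<j-i+1] ! t) (map (\<lambda>t. xs!(i+t)) [0..<j-i+1] ! Suc t)"
    using cyc_adj[OF cyc, of "i+t"] ij by (simp del: upt_Suc)
qed

lemma seg_props:
  assumes "i \<le> j"
  shows "map (\<lambda>t. xs!(i+t)) [0..<j-i+1] \<noteq> []"
    "hd (map (\<lambda>t. xs!(i+t)) [0..<j-i+1]) = xs!i"
    "last (map (\<lambda>t. xs!(i+t)) [0..<j-i+1]) = xs!j"
    "set (map (\<lambda>t. xs!(i+t)) [0..<j-i+1]) = (\<lambda>t. xs!t) ` {i..j}"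
proof -
  show "map (\<lambda>t. xs!(i+t)) [0..<j-i+1] \<noteq> []" by simp
  show "hd (map (\<lambda>t. xs!(i+t)) [0..<j-i+1]) = xs!i" by (simp add: hd_map del: upt_Suc)
  show "last (map (\<lambda>t. xs!(i+t)) [0..<j-i+1]) = xs!j" using assms by (simp add: last_map del: upt_Suc)
  show "set (map (\<lambda>t. xs!(i+t)) [0..<j-i+1]) = (\<lambda>t. xs!t) ` {i..j}"
  proof
    show "set (map (\<lambda>t. xs!(i+t)) [0..<j-i+1]) \<subseteq> (\<lambda>t. xs!t) ` {i..j}" using assms by auto
    show "(\<lambda>t. xs!t) ` {i..j} \<subseteq> set (map (\<lambda>t. xs!(i+t)) [0..<j-i+1])"
    proof
      fix x assume "x \<in> (\<lambda>t. xs!t) ` {i..j}"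
      then obtain s where s: "s \<in> {i..j}" "x = xs!s" by auto
      then have "s - i \<in> set [0..<j-i+1]" by auto
      moreover have "x = xs!(i + (s-i))" using s by simp
      ultimately show "x \<in> set (map (\<lambda>t. xs!(i+t)) [0..<j-i+1])" by (metis imageI set_map)
    qed
  qed
qed

lemma chordless2:
  assumes g: "graph V E" and cyc: "is_cycle V E xs"
    and mn: "\<forall>ys. is_cycle V E ys \<longrightarrow> length xs \<le> length ys"
    and ij: "0 < i" "0 < j" "i < length xs" "j < length xs" and e: "E (xs!i) (xs!j)"
  shows "j = Suc i \<or> i = Suc j"
proof -
  have ne: "i \<noteq> j" using e g unfolding graph_def by auto
  show ?thesis
  proof (cases "i < j")
    case True
    then show ?thesis using chordless[OF g cyc mn True ij(4) e] ij by auto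
  next
    case False
    then have "j < i" using ne by simp
    moreover have "E (xs!j) (xs!i)" using e g unfolding graph_def by auto
    ultimately show ?thesis using chordless[OF g cyc mn _ ij(3)] ij by fastforce
  qed
qed

theorem lemma5p7:
  fixes V :: "'a set" and E :: "'a \<Rightarrow> 'a \<Rightarrow> bool"
  assumes "graph V E" and "connected_on E V" and "C_HH V E" and "\<not> is_tree V E"
  shows "girth V E \<le> 6"
proof -
  note g = assms(1)
  have "\<exists>xs. is_cycle V E xs" using assms(2,4) unfolding is_tree_def acyclic_graph_def by auto
  then have ex: "\<exists>m. \<exists>xs. is_cycle V E xs \<and> length xs = m" by auto
  define m where "m = (LEAST m. \<exists>xs. is_cycle V E xs \<and> length xs = m)"
  obtain xs where cyc: "is_cycle V E xs" and lm: "length xs = m"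
    using LeastI_ex[OF ex] unfolding m_def by blast
  have mn: "\<forall>ys. is_cycle V E ys \<longrightarrow> length xs \<le> length ys"
    using lm unfolding m_def by (auto intro: Least_le)
  define n where "n = length xs"
  have gl: "girth V E \<le> enat k" if "is_cycle V E ys" "length ys \<le> k" for ys k
  proof -
    have "girth V E \<le> enat (length ys)" unfolding girth_def using that by (auto intro: INF_lower)
    also have "\<dots> \<le> enat k" using that by simp
    finally show ?thesis .
  qed
  show ?thesis
  proof (cases "n \<le> 6")
    case True
    then show ?thesis using gl[OF cyc, of 6] n_def by (simp add: numeral_eq_enat)
  next
    case False
    then have n7: "n \<ge> 7" by simp
    have dxs: "distinct xs" and sxs: "set xs \<subseteq> V" using cyc unfolding is_cycle_def by auto
    define d :: nat where "d = (if even n then 4 else 3)"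
    define k where "k = (n + d) div 2"
    have k2: "2 * k = n + d" unfolding k_def d_def by auto
    have d34: "d = 3 \<or> d = 4" unfolding d_def by auto
    define idx where "idx x = (THE i. i < n \<and> xs!i = x)" for x
    have idx: "idx (xs!i) = i" if "i < n" for i
      unfolding idx_def
      by (rule the_equality) (use that dxs n_def in \<open>auto simp: nth_eq_iff_index_eq\<close>)
    define h where "h i = (if i \<le> k then i else 2*k - i)" for i
    define f where "f x = xs ! h (idx x)" for x
    define S where "S = (\<lambda>i. xs!i) ` {1..<n}"
    have hr: "1 \<le> h i \<and> h i < n" if "1 \<le> i" "i < n" for i
      using that k2 d34 unfolding h_def by auto
    have fS: "f (xs!i) = xs ! h i" if "i < n" for i using idx that unfolding f_def by simp
    have Ssub: "S \<subseteq> V" unfolding S_def using sxs n_def by auto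
    have finS: "finite S" unfolding S_def by simp
    have connS: "connected_on E S" unfolding connected_on_def
    proof (intro conjI ballI)
      show "S \<noteq> {}" unfolding S_def using n7 by auto
    next
      fix x y assume "x \<in> S" "y \<in> S"
      then obtain i j where ij: "1 \<le> i" "i < n" "1 \<le> j" "j < n" "x = xs!i" "y = xs!j"
        unfolding S_def by auto
      show "\<exists>xs'. xs' \<noteq> [] \<and> hd xs' = x \<and> last xs' = y \<and> set xs' \<subseteq> S \<and> walk E xs'"
      proof (cases "i \<le> j")
        case True
        let ?w = "map (\<lambda>t. xs!(i+t)) [0..<j-i+1]"
        have "set ?w \<subseteq> S" unfolding seg_props(4)[OF True] S_def using ij by auto
        then show ?thesis using seg_props[OF True] seg_walk[OF cyc True] ij n_def by metis
      next
        case False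
        then have ji: "j \<le> i" by simp
        let ?w = "map (\<lambda>t. xs!(j+t)) [0..<i-j+1]"
        have "set (rev ?w) \<subseteq> S" unfolding set_rev seg_props(4)[OF ji] S_def using ij by auto
        moreover have "walk E (rev ?w)" using walk_rev[OF g seg_walk[OF cyc ji]] ij n_def by simp
        moreover have "rev ?w \<noteq> []" "hd (rev ?w) = x" "last (rev ?w) = y"
          using seg_props[OF ji] ij by (auto simp: hd_rev last_rev)
        ultimately show ?thesis by metis
      qed
    qed
    have homf: "hom_on E S V f" unfolding hom_on_def
    proof (intro conjI ballI impI)
      fix x assume "x \<in> S"
      then obtain i where "1 \<le> i" "i < n" "x = xs!i" unfolding S_def by auto
      then show "f x \<in> V" using fS hr sxs n_def by (metis nth_mem subsetD)
    next
      fix x y assume "x \<in> S" "y \<in> S" "E x y"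
      then obtain i j where ij: "1 \<le> i" "i < n" "1 \<le> j" "j < n" "x = xs!i" "y = xs!j"
        unfolding S_def by auto
      have "j = Suc i \<or> i = Suc j"
        using chordless2[OF g cyc mn] ij \<open>E x y\<close> n_def by auto
      then have "Suc (h i) = h j \<or> Suc (h j) = h i"
        using k2 d34 ij unfolding h_def by auto
      then show "E (f x) (f y)" using cyc_adj2[OF g cyc] hr ij fS n_def by simp
    qed
    obtain gg where hg: "hom_on E V V gg" and agree: "\<forall>x\<in>S. gg x = f x"
      using assms(3) Ssub finS connS homf unfolding C_HH_def by blast
    define w where "w = gg (xs!0)"
    have x0V: "xs!0 \<in> V" "xs!1 \<in> V" "xs!(n-1) \<in> V" using sxs n7 n_def by (auto intro!: nth_mem[THEN subsetD[OF sxs]])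
    have "E (xs!0) (xs!1)" using cyc_adj[OF cyc, of 0] n7 n_def by simp
    then have "E w (gg (xs!1))" using hg x0V unfolding hom_on_def w_def by auto
    moreover have "gg (xs!1) = xs!1"
      using agree fS[of 1] n7 k2 unfolding S_def h_def by auto
    ultimately have w1: "E w (xs!1)" by simp
    have "E (xs!(n-1)) (xs!0)" using cyc_last[OF cyc] n_def by simp
    then have "E (gg (xs!(n-1))) w" using hg x0V unfolding hom_on_def w_def by auto
    moreover have "gg (xs!(n-1)) = xs!(d+1)"
    proof -
      have "xs!(n-1) \<in> S" unfolding S_def using n7 by auto
      moreover have "h (n-1) = d+1" unfolding h_def using k2 d34 n7 by auto
      ultimately show ?thesis using agree fS[of "n-1"] n7 by auto
    qed
    ultimately have w2: "E w (xs!(d+1))" using g unfolding graph_def by auto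
    have wV: "w \<in> V" using w1 g unfolding graph_def by auto
    define ys where "ys = map (\<lambda>t. xs!(Suc t)) [0..<d+1] @ [w]"
    have lys: "length ys = d + 2" unfolding ys_def by simp
    have wne: "w \<noteq> xs!a" if "1 \<le> a" "a \<le> d+1" for a
    proof
      assume wa: "w = xs!a"
      have an: "a < n" using that d34 n7 by auto
      show False
      proof (cases "a = 1 \<or> a = d+1")
        case True
        then show False using w1 w2 wa g unfolding graph_def by auto
      next
        case False
        show False
        proof (cases "a = 2")
          case True
          then have "E (xs!2) (xs!(d+1))" using w2 wa by simp
          then show False using chordless2[OF g cyc mn, of 2 "d+1"] d34 n7 n_def by auto
        next
          case False
          have "E (xs!a) (xs!1)" using w1 wa by simp
          then show False using chordless2[OF g cyc mn, of a 1] False \<open>\<not> (a = 1 \<or> a = d+1)\<close>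
            that an n_def by auto
        qed
      qed
    qed
    have cys: "is_cycle V E ys" unfolding is_cycle_def
    proof (intro conjI allI impI)
      show "3 \<le> length ys" using lys d34 by auto
      show "distinct ys"
      proof -
        have "distinct (map (\<lambda>t. xs!(Suc t)) [0..<d+1])"
          unfolding distinct_map using dxs d34 n7 n_def
          by (auto simp: inj_on_def nth_eq_iff_index_eq simp del: upt_Suc)
        moreover have "w \<notin> set (map (\<lambda>t. xs!(Suc t)) [0..<d+1])"
        proof
          assume "w \<in> set (map (\<lambda>t. xs!(Suc t)) [0..<d+1])"
          then obtain t where "t < d+1" "w = xs!(Suc t)" by (auto simp del: upt_Suc)
          then show False using wne[of "Suc t"] by simp
        qed
        ultimately show ?thesis unfolding ys_def by (simp del: upt_Suc)
      qed
      show "set ys \<subseteq> V" unfolding ys_def using sxs wV d34 n7 n_def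
        by (auto simp del: upt_Suc intro!: nth_mem[THEN subsetD[OF sxs]])
    next
      fix t assume t: "t < length ys"
      show "E (ys!t) (ys!(Suc t mod length ys))"
      proof (cases "t < d")
        case True
        then have "ys!t = xs!(Suc t)" "ys!(Suc t mod length ys) = xs!(Suc (Suc t))"
          unfolding ys_def using lys by (auto simp: nth_append simp del: upt_Suc)
        then show ?thesis using cyc_adj[OF cyc, of "Suc t"] True d34 n7 n_def by auto
      next
        case False
        then have "t = d \<or> t = d + 1" using t lys by auto
        then show ?thesis
        proof
          assume "t = d"
          then have "ys!t = xs!(d+1)" "ys!(Suc t mod length ys) = w"
            unfolding ys_def using lys by (auto simp: nth_append simp del: upt_Suc)
          then show ?thesis using w2 g unfolding graph_def by auto
        next
          assume "t = d+1"
          then have "ys!t = w" "ys!(Suc t mod length ys) = xs!1"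
            unfolding ys_def using lys by (auto simp: nth_append simp del: upt_Suc)
          then show ?thesis using w1 by simp
        qed
      qed
    qed
    show ?thesis using gl[OF cys, of 6] lys d34 by (auto simp: numeral_eq_enat)
  qed
qed

end
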